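(* Let $(\{X\},\{Y\},T)$ be a stationary and ergodic random triple, where $\{X\},\{Y\}$ are independent unit-intensity Poisson point processes in $\mathbb{R}^d$ and $T$ is a cyclically monotone bijection from $\{X\}$ onto $\{Y\}$. Then for every $\varepsilon>0$ there exist a deterministic $L<\infty$ and a random radius $r_*<\infty$ almost surely such that for all $R\ge r_*$ $$\#\{X\in(-R,R)^d : |T(X)-X|>L\}\le(\varepsilon R)^d.$$
   Context: Cyclic monotonicity of $T$: for every finite $\{X_1,\dots,X_N\}\subset\{X\}$, $\sum_{n=1}^N T(X_n)\cdot(X_n-X_{n-1})\ge0$ with $X_0:=X_N$. Measurability: for all Lebesgue-measurable $U,V$ (one of finite measure), $N_{U,V}:=\#\{(X,Y)\in U\times V:Y=T(X)\}$ is a random variable. Stationarity and ergodicity are with respect to the $\mathbb{Z}^d$-action $(\{X\},\{Y\},T)\mapsto(\{\bar x+X\},\{\bar x+Y\},T(\cdot-\bar x)+\bar x)$, $\bar x\in\mathbb{Z}^d$. *)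

theory Defs
  imports "HOL-Probability.Probability"
begin

definition ecount :: "'b set \<Rightarrow> 'b set \<Rightarrow> ennreal" where
  "ecount S B = emeasure (count_space UNIV) (S \<inter> B)"

definition config_space :: "('a::euclidean_space) set measure" where
  "config_space = sigma UNIV
     {{S. ecount S B \<in> A} | B A. B \<in> sets borel \<and> bounded B \<and> A \<in> sets (borel :: ennreal measure)}"

definition unit_poisson_pp :: "'w measure \<Rightarrow> ('w \<Rightarrow> ('a::euclidean_space) set) \<Rightarrow> bool" where
  "unit_poisson_pp M Xs \<longleftrightarrow>
     Xs \<in> measurable M config_space \<and>
     (AE \<omega> in M. \<forall>B. bounded B \<longrightarrow> finite (Xs \<omega> \<inter> B)) \<and>
     (\<forall>B \<in> sets borel. bounded B \<longrightarrow> (\<forall>n::nat.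
        measure M {\<omega> \<in> space M. ecount (Xs \<omega>) B = of_nat n}
          = exp (- measure lborel B) * measure lborel B ^ n / fact n)) \<and>
     (\<forall>(I::nat set) Bs. finite I \<longrightarrow> disjoint_family_on Bs I \<longrightarrow>
        (\<forall>i\<in>I. Bs i \<in> sets borel \<and> bounded (Bs i)) \<longrightarrow>
        prob_space.indep_vars M (\<lambda>_. borel) (\<lambda>i \<omega>. ecount (Xs \<omega>) (Bs i)) I)"

(* The graph {(X, T X) : X \<in> Xs} encodes the triple ({X},{Y},T) (as Y = T X). *)
definition graph_of :: "'a set \<Rightarrow> ('a \<Rightarrow> 'a) \<Rightarrow> ('a \<times> 'a) set" where
  "graph_of Xs T = {(x, T x) | x. x \<in> Xs}"

definition pair_count :: "('a \<times> 'a) set \<Rightarrow> 'a set \<Rightarrow> 'a set \<Rightarrow> ennreal" where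
  "pair_count G U V = ecount G (U \<times> V)"

definition admissible_pair :: "('a::euclidean_space) set \<Rightarrow> 'a set \<Rightarrow> bool" where
  "admissible_pair U V \<longleftrightarrow> U \<in> sets lebesgue \<and> V \<in> sets lebesgue \<and>
     (emeasure lebesgue U < \<infinity> \<or> emeasure lebesgue V < \<infinity>)"

definition triple_space :: "(('a::euclidean_space) \<times> 'a) set measure" where
  "triple_space = sigma UNIV
     {{G. pair_count G U V \<in> A} | U V A. admissible_pair U V \<and> A \<in> sets (borel :: ennreal measure)}"

definition lattice :: "('a::euclidean_space) set" where
  "lattice = {z. \<forall>i\<in>Basis. z \<bullet> i \<in> \<int>}"

(* Shift of the triple by z: ({z+X},{z+Y},T(.-z)+z), on graphs. *)
definition shift_graph :: "('a::euclidean_space) \<Rightarrow> ('a \<times> 'a) set \<Rightarrow> ('a \<times> 'a) set" where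
  "shift_graph z G = (\<lambda>(x, y). (z + x, z + y)) ` G"

definition cyclically_monotone :: "('a::euclidean_space) set \<Rightarrow> ('a \<Rightarrow> 'a) \<Rightarrow> bool" where
  "cyclically_monotone Xs T \<longleftrightarrow>
     (\<forall>xs. xs \<noteq> [] \<longrightarrow> distinct xs \<longrightarrow> set xs \<subseteq> Xs \<longrightarrow>
        (\<Sum>n<length xs. T (xs ! n) \<bullet> (xs ! n - xs ! ((n + length xs - 1) mod length xs))) \<ge> 0)"

definition stationary_triple :: "'w measure \<Rightarrow> ('w \<Rightarrow> (('a::euclidean_space) \<times> 'a) set) \<Rightarrow> bool" where
  "stationary_triple M G \<longleftrightarrow>
     (\<forall>z\<in>lattice. distr M triple_space (\<lambda>\<omega>. shift_graph z (G \<omega>)) = distr M triple_space G)"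

definition ergodic_triple :: "'w measure \<Rightarrow> ('w \<Rightarrow> (('a::euclidean_space) \<times> 'a) set) \<Rightarrow> bool" where
  "ergodic_triple M G \<longleftrightarrow>
     (\<forall>A\<in>sets triple_space. (\<forall>z\<in>lattice. \<forall>H. shift_graph z H \<in> A \<longleftrightarrow> H \<in> A) \<longrightarrow>
        measure M (G -` A \<inter> space M) = 0 \<or> measure M (G -` A \<inter> space M) = 1)"

end

theory Submission
  imports Defs
begin



lemma ecount_eq: "ecount S B = (if finite (S \<inter> B) then of_nat (card (S \<inter> B)) else \<infinity>)"
  unfolding ecount_def by (rule emeasure_count_space) simp

lemma ecount_image_inj:
  assumes "inj_on f (S \<inter> A)" "f ` S \<inter> B = f ` (S \<inter> A)"
  shows "ecount (f ` S) B = ecount S A"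
proof -
  have "finite (f ` (S \<inter> A)) \<longleftrightarrow> finite (S \<inter> A)" using assms(1) finite_image_iff by blast
  moreover have "card (f ` (S \<inter> A)) = card (S \<inter> A)" using assms(1) card_image by blast
  ultimately show ?thesis unfolding ecount_eq assms(2) by simp
qed

lemma pair_count_shift:
  "pair_count (shift_graph z H) U V = pair_count H {x. z + x \<in> U} {y. z + y \<in> V}"
  unfolding pair_count_def shift_graph_def
  by (rule ecount_image_inj) (auto simp: inj_on_def image_iff)

definition Cc :: "'a::euclidean_space \<Rightarrow> 'a set" where
  "Cc u = {x. \<forall>b\<in>Basis. u \<bullet> b \<le> x \<bullet> b \<and> x \<bullet> b < u \<bullet> b + 1}"
definition Dd :: "nat \<Rightarrow> 'a::euclidean_space \<Rightarrow> 'a set" where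
  "Dd L u = {y. \<forall>b\<in>Basis. u \<bullet> b - real L \<le> y \<bullet> b \<and> y \<bullet> b < u \<bullet> b + real L + 1}"
definition Ff :: "nat \<Rightarrow> 'a::euclidean_space \<Rightarrow> ('a \<times> 'a) set \<Rightarrow> ennreal" where
  "Ff L u H = pair_count H (Cc u) (- Dd L u)"

lemma Cc_shift: "{x. z + x \<in> Cc u} = Cc (u - z)"
  by (auto simp: Cc_def inner_diff_left inner_add_left)
lemma Dd_shift: "{x. z + x \<in> - Dd L u} = - Dd L (u - z)"
  unfolding Dd_def by (auto simp: inner_diff_left inner_add_left; smt (verit))

lemma Ff_shift: "Ff L u (shift_graph z H) = Ff L (u - z) H"
  unfolding Ff_def pair_count_shift Cc_shift Dd_shift ..

lemma Cc_borel: "Cc u \<in> sets borel"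
  unfolding Cc_def by measurable
lemma Dd_borel: "Dd L u \<in> sets borel"
  unfolding Dd_def by measurable

lemma Cc_bounded: "bounded (Cc u)"
proof -
  have "Cc u \<subseteq> cbox u (u + One)" by (auto simp: Cc_def mem_box inner_add_left less_imp_le)
  then show ?thesis using bounded_cbox bounded_subset by blast
qed

lemma admissible_borel:
  assumes "U \<in> sets borel" "bounded U" "V \<in> sets borel"
  shows "admissible_pair U V"
proof -
  have "U \<in> sets lebesgue" "V \<in> sets lebesgue" using assms by auto
  moreover have "emeasure lebesgue U < \<infinity>"
    using bounded_set_imp_lmeasurable[OF assms(2) \<open>U \<in> sets lebesgue\<close>] unfolding fmeasurable_def by blast
  ultimately show ?thesis unfolding admissible_pair_def by simp
qed

lemma admissible_Ff: "admissible_pair (Cc u) (- Dd L u)"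
  by (rule admissible_borel) (auto intro: Cc_borel Dd_borel Cc_bounded borel_comp)

lemma admissible_shift:
  assumes "admissible_pair U V"
  shows "admissible_pair {x. z + x \<in> U} {y. z + y \<in> V}"
proof -
  have e: "{x. z + x \<in> A} = (\<lambda>x. - z + x) ` A" for A by force
  have m: "emeasure lebesgue {x. z + x \<in> A} = emeasure lebesgue A" for A
  proof -
    have "(\<lambda>x. 1 *\<^sub>R x + - z) ` A = {x. z + x \<in> A}" by force
    then show ?thesis using emeasure_lebesgue_affine[of 1 "-z" A] by simp
  qed
  show ?thesis using assms unfolding admissible_pair_def e[symmetric] m
    using lebesgue_sets_translation e by metis
qed




lemma space_triple: "space triple_space = UNIV"
  unfolding triple_space_def by (simp add: space_measure_of_conv)

lemma sets_triple: "sets triple_space = sigma_sets UNIV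
     {{G. pair_count G U V \<in> A} | U V A. admissible_pair U V \<and> A \<in> sets (borel :: ennreal measure)}"
  unfolding triple_space_def by (rule sets_measure_of) auto

lemma pair_count_meas_triple:
  assumes "admissible_pair U V"
  shows "(\<lambda>H. pair_count H U V) \<in> borel_measurable (triple_space :: ('a::euclidean_space \<times> 'a) set measure)"
proof (rule measurableI)
  fix A :: "ennreal set" assume "A \<in> sets borel"
  then have "{H. pair_count H U V \<in> A} \<in> sets (triple_space :: ('a \<times> 'a) set measure)"
    unfolding sets_triple using assms by (intro sigma_sets.Basic) blast
  then show "(\<lambda>H. pair_count H U V) -` A \<inter> space triple_space \<in> sets (triple_space :: ('a \<times> 'a) set measure)"
    by (simp add: space_triple vimage_def)
qed simp

lemma Ff_meas_triple[measurable]: "Ff L u \<in> borel_measurable triple_space"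
  unfolding Ff_def[abs_def] by (rule pair_count_meas_triple[OF admissible_Ff])

lemma meas_into_triple:
  fixes G :: "'w \<Rightarrow> ('a::euclidean_space \<times> 'a) set"
  assumes "\<And>U V. admissible_pair U V \<Longrightarrow> (\<lambda>\<omega>. pair_count (G \<omega>) U V) \<in> borel_measurable M"
  shows "G \<in> M \<rightarrow>\<^sub>M triple_space"
  unfolding triple_space_def
proof (rule measurable_measure_of)
  fix Y assume "Y \<in> {{G. pair_count G U V \<in> A} | U V A. admissible_pair (U::'a set) V \<and> A \<in> sets (borel :: ennreal measure)}"
  then obtain U V A where Y: "Y = {G. pair_count G U V \<in> A}" "admissible_pair U V" "A \<in> sets (borel :: ennreal measure)"
    by blast
  have "(\<lambda>\<omega>. pair_count (G \<omega>) U V) -` A \<inter> space M \<in> sets M"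
    using measurable_sets[OF assms[OF Y(2)] Y(3)] .
  then show "G -` Y \<inter> space M \<in> sets M" by (simp add: Y(1) vimage_def)
qed auto

lemma shift_meas_into_triple:
  fixes G :: "'w \<Rightarrow> ('a::euclidean_space \<times> 'a) set"
  assumes "\<And>U V. admissible_pair U V \<Longrightarrow> (\<lambda>\<omega>. pair_count (G \<omega>) U V) \<in> borel_measurable M"
  shows "(\<lambda>\<omega>. shift_graph z (G \<omega>)) \<in> M \<rightarrow>\<^sub>M triple_space"
  by (rule meas_into_triple) (simp add: pair_count_shift assms admissible_shift)

lemma shift_graph_comp: "shift_graph z (shift_graph w H) = shift_graph (z + w) H"
  unfolding shift_graph_def by (auto simp: image_iff add.assoc)

lemma shift_graph_0: "shift_graph 0 H = H"
  unfolding shift_graph_def by auto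

lemma lattice_add: "z \<in> lattice \<Longrightarrow> w \<in> lattice \<Longrightarrow> z + w \<in> lattice"
  unfolding lattice_def by (auto simp: inner_add_left)
lemma lattice_uminus: "z \<in> lattice \<Longrightarrow> - z \<in> lattice"
  unfolding lattice_def by auto
lemma lattice_diff: "z \<in> lattice \<Longrightarrow> w \<in> lattice \<Longrightarrow> z - w \<in> lattice"
  unfolding lattice_def by (auto simp: inner_diff_left)
lemma lattice_0: "0 \<in> lattice"
  unfolding lattice_def by auto

lemma stationary_nn_integral:
  fixes G :: "'w \<Rightarrow> ('a::euclidean_space \<times> 'a) set"
  assumes "\<And>U V. admissible_pair U V \<Longrightarrow> (\<lambda>\<omega>. pair_count (G \<omega>) U V) \<in> borel_measurable M"
    and "stationary_triple M G" and "z \<in> lattice"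
    and "\<Phi> \<in> borel_measurable triple_space"
  shows "(\<integral>\<^sup>+\<omega>. \<Phi> (shift_graph z (G \<omega>)) \<partial>M) = (\<integral>\<^sup>+\<omega>. \<Phi> (G \<omega>) \<partial>M)"
proof -
  have d: "distr M triple_space (\<lambda>\<omega>. shift_graph z (G \<omega>)) = distr M triple_space G"
    using assms(2,3) unfolding stationary_triple_def by blast
  have "(\<integral>\<^sup>+\<omega>. \<Phi> (shift_graph z (G \<omega>)) \<partial>M) = integral\<^sup>N (distr M triple_space (\<lambda>\<omega>. shift_graph z (G \<omega>))) \<Phi>"
    by (rule nn_integral_distr[symmetric]) (use assms shift_meas_into_triple[OF assms(1)] in auto)
  also have "\<dots> = integral\<^sup>N (distr M triple_space G) \<Phi>" by (simp add: d)
  also have "\<dots> = (\<integral>\<^sup>+\<omega>. \<Phi> (G \<omega>) \<partial>M)"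
    by (rule nn_integral_distr) (use assms meas_into_triple[OF assms(1)] in auto)
  finally show ?thesis .
qed




definition LB :: "('a::euclidean_space \<Rightarrow> int) \<Rightarrow> ('a \<Rightarrow> int) \<Rightarrow> 'a set" where
  "LB lo hi = {w \<in> lattice. \<forall>b\<in>Basis. real_of_int (lo b) \<le> w \<bullet> b \<and> w \<bullet> b < real_of_int (hi b)}"

lemma LB_bij:
  "bij_betw (\<lambda>f. \<Sum>b\<in>Basis. real_of_int (f b) *\<^sub>R b) (PiE Basis (\<lambda>b. {lo b..<hi b})) (LB lo hi)"
proof (rule bij_betw_byWitness[where f'="\<lambda>w. restrict (\<lambda>b. \<lfloor>w \<bullet> b\<rfloor>) Basis"])
  show "\<forall>a\<in>PiE Basis (\<lambda>b. {lo b..<hi b}). restrict (\<lambda>b. \<lfloor>(\<Sum>b\<in>Basis. real_of_int (a b) *\<^sub>R b) \<bullet> b\<rfloor>) Basis = a"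
    by (auto simp: PiE_def extensional_def restrict_def fun_eq_iff)
  show "\<forall>a'\<in>LB lo hi. (\<Sum>b\<in>Basis. real_of_int (restrict (\<lambda>b. \<lfloor>a' \<bullet> b\<rfloor>) Basis b) *\<^sub>R b) = a'"
  proof
    fix w assume "w \<in> LB lo hi"
    then have "\<forall>b\<in>Basis. w \<bullet> b \<in> \<int>" by (auto simp: LB_def lattice_def)
    then have "(\<Sum>b\<in>Basis. real_of_int (restrict (\<lambda>b. \<lfloor>w \<bullet> b\<rfloor>) Basis b) *\<^sub>R b) = (\<Sum>b\<in>Basis. (w \<bullet> b) *\<^sub>R b)"
      by (intro sum.cong) auto
    then show "(\<Sum>b\<in>Basis. real_of_int (restrict (\<lambda>b. \<lfloor>w \<bullet> b\<rfloor>) Basis b) *\<^sub>R b) = w"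
      by (simp add: euclidean_representation)
  qed
  show "(\<lambda>f. \<Sum>b\<in>Basis. real_of_int (f b) *\<^sub>R b) ` PiE Basis (\<lambda>b. {lo b..<hi b}) \<subseteq> LB lo hi"
    by (auto simp: LB_def lattice_def PiE_def Pi_def)
  show "(\<lambda>w. restrict (\<lambda>b. \<lfloor>w \<bullet> b\<rfloor>) Basis) ` LB lo hi \<subseteq> PiE Basis (\<lambda>b. {lo b..<hi b})"
  proof
    fix f assume "f \<in> (\<lambda>w. restrict (\<lambda>b. \<lfloor>w \<bullet> b\<rfloor>) Basis) ` LB lo hi"
    then obtain w where w: "w \<in> LB lo hi" "f = restrict (\<lambda>b. \<lfloor>w \<bullet> b\<rfloor>) Basis" by blast
    have "lo b \<le> \<lfloor>w \<bullet> b\<rfloor> \<and> \<lfloor>w \<bullet> b\<rfloor> < hi b" if "b \<in> Basis" for b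
      using w(1) that unfolding LB_def by (auto simp: le_floor_iff floor_less_iff)
    then show "f \<in> PiE Basis (\<lambda>b. {lo b..<hi b})" using w(2) by auto
  qed
qed

lemma LB_finite: "finite (LB lo hi)"
proof -
  have "finite (PiE (Basis::'a set) (\<lambda>b. {lo b..<hi b}))" by (intro finite_PiE) auto
  then show ?thesis using bij_betw_finite[OF LB_bij] by blast
qed

lemma LB_card: "card (LB lo hi) = (\<Prod>b\<in>Basis. nat (hi b - lo b))"
  using bij_betw_same_card[OF LB_bij, symmetric] by (simp add: card_PiE)

definition Qc :: "'a::euclidean_space \<Rightarrow> nat \<Rightarrow> 'a set" where
  "Qc z n = {w\<in>lattice. \<forall>b\<in>Basis. z \<bullet> b - real n \<le> w \<bullet> b \<and> w \<bullet> b < z \<bullet> b + real n}"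

lemma lattice_floor: "z \<in> lattice \<Longrightarrow> b \<in> Basis \<Longrightarrow> real_of_int \<lfloor>z \<bullet> b\<rfloor> = z \<bullet> b"
  unfolding lattice_def by auto

lemma Qc_LB: "z \<in> lattice \<Longrightarrow> Qc z n = LB (\<lambda>b. \<lfloor>z \<bullet> b\<rfloor> - int n) (\<lambda>b. \<lfloor>z \<bullet> b\<rfloor> + int n)"
  unfolding Qc_def LB_def by (auto simp: lattice_floor)

lemma Qc_finite: "z \<in> lattice \<Longrightarrow> finite (Qc z n)"
  by (simp add: Qc_LB LB_finite)

lemma Qc_card: "z \<in> lattice \<Longrightarrow> card (Qc z n) = (2 * n) ^ DIM('a)"
  for z :: "'a::euclidean_space"
proof -
  assume z: "z \<in> lattice"
  have "card (Qc z n) = (\<Prod>b\<in>(Basis::'a set). nat ((\<lfloor>z \<bullet> b\<rfloor> + int n) - (\<lfloor>z \<bullet> b\<rfloor> - int n)))"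
    by (simp add: Qc_LB[OF z] LB_card)
  also have "\<dots> = (\<Prod>b\<in>(Basis::'a set). 2 * n)" by (intro prod.cong) auto
  finally show ?thesis by simp
qed

lemma Qc_center: "1 \<le> n \<Longrightarrow> z \<in> lattice \<Longrightarrow> z \<in> Qc z n"
  unfolding Qc_def by auto

lemma Qc_mono: "n \<le> m \<Longrightarrow> Qc z n \<subseteq> Qc z m"
  unfolding Qc_def by force

lemma Qc_translate: "z \<in> lattice \<Longrightarrow> (\<lambda>u. u + z) ` Qc 0 n = Qc z n"
proof (intro equalityI subsetI)
  fix x assume "z \<in> lattice" "x \<in> (\<lambda>u. u + z) ` Qc 0 n"
  then show "x \<in> Qc z n" by (auto simp: Qc_def inner_add_left lattice_add)
next
  fix x assume z: "z \<in> lattice" and x: "x \<in> Qc z n"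
  then have "x - z \<in> Qc 0 n" by (auto simp: Qc_def inner_diff_left lattice_diff)
  then show "x \<in> (\<lambda>u. u + z) ` Qc 0 n" by (intro image_eqI[of _ _ "x - z"]) auto
qed

lemma Qc_shift_sub:
  assumes "\<forall>b\<in>Basis. \<bar>z \<bullet> b\<bar> \<le> real j"
  shows "Qc z n \<subseteq> Qc 0 (n + j)"
  using assms unfolding Qc_def by (auto; smt (verit))

lemma Qc_nbhd:
  assumes "z \<in> lattice" "z0 \<in> lattice" "p \<in> Qc z n" "p \<in> Qc z0 r" "n \<le> r"
  shows "z \<in> LB (\<lambda>b. \<lfloor>z0 \<bullet> b\<rfloor> - 2 * int r) (\<lambda>b. \<lfloor>z0 \<bullet> b\<rfloor> + 2 * int r + 1)"
proof -
  have "real_of_int (\<lfloor>z0 \<bullet> b\<rfloor> - 2 * int r) \<le> z \<bullet> b \<and> z \<bullet> b < real_of_int (\<lfloor>z0 \<bullet> b\<rfloor> + 2 * int r + 1)"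
    if b: "b \<in> Basis" for b
  proof -
    have "z \<bullet> b - real n \<le> p \<bullet> b" "p \<bullet> b < z \<bullet> b + real n"
         "z0 \<bullet> b - real r \<le> p \<bullet> b" "p \<bullet> b < z0 \<bullet> b + real r"
      using assms(3,4) b unfolding Qc_def by auto
    moreover have "real_of_int \<lfloor>z0 \<bullet> b\<rfloor> = z0 \<bullet> b" using lattice_floor[OF assms(2) b] .
    ultimately show ?thesis using assms(5) by auto
  qed
  then show ?thesis using assms(1) unfolding LB_def by auto
qed

lemma nbhd_card:
  "card (LB (\<lambda>b. \<lfloor>z0 \<bullet> b\<rfloor> - 2 * int r) (\<lambda>b. \<lfloor>z0 \<bullet> b\<rfloor> + 2 * int r + 1)) = (4 * r + 1) ^ DIM('a)"
  for z0 :: "'a::euclidean_space"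
proof -
  have "card (LB (\<lambda>b. \<lfloor>z0 \<bullet> b\<rfloor> - 2 * int r) (\<lambda>b. \<lfloor>z0 \<bullet> b\<rfloor> + 2 * int r + 1))
      = (\<Prod>b\<in>(Basis::'a set). 4 * r + 1)"
    unfolding LB_card by (intro prod.cong) auto
  then show ?thesis by simp
qed




lemma covering:
  fixes g :: "'a::euclidean_space \<Rightarrow> ennreal" and rad :: "'a \<Rightarrow> nat" and c :: real
  assumes "finite E" "E \<subseteq> lattice" "\<forall>z\<in>E. 1 \<le> rad z"
    "\<forall>z\<in>E. ennreal (c * real (rad z) ^ DIM('a)) \<le> (\<Sum>w\<in>Qc z (rad z). g w)" "c \<ge> 0"
  shows "ennreal (c * real (card E)) \<le> 5 ^ DIM('a) * (\<Sum>w\<in>(\<Union>z\<in>E. Qc z (rad z)). g w)"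
  using assms
proof (induction "card E" arbitrary: E rule: less_induct)
  case less
  show ?case
  proof (cases "E = {}")
    case True then show ?thesis by simp
  next
    case False
    define r where "r = Max (rad ` E)"
    have z0ex: "r \<in> rad ` E" unfolding r_def using False less.prems(1) by (intro Max_in) auto
    then obtain z0 where z0: "z0 \<in> E" "rad z0 = r" by blast
    have rmax: "\<forall>z\<in>E. rad z \<le> r" unfolding r_def using less.prems(1) by auto
    have z0L: "z0 \<in> lattice" using z0 less.prems(2) by auto
    have r1: "1 \<le> r" using z0 less.prems(3) by auto
    define R0 where "R0 = {z\<in>E. Qc z (rad z) \<inter> Qc z0 r \<noteq> {}}"
    define E' where "E' = E - R0"
    have z0R: "z0 \<in> R0" unfolding R0_def using z0 Qc_center[OF r1 z0L] by auto
    have R0E: "R0 \<subseteq> E" unfolding R0_def by auto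
    have finR0: "finite R0" using R0E less.prems(1) finite_subset by blast
    have cardlt: "card E' < card E" unfolding E'_def
      using z0R R0E less.prems(1) by (intro psubset_card_mono) auto
    let ?U' = "\<Union>z\<in>E'. Qc z (rad z)"
    let ?U = "\<Union>z\<in>E. Qc z (rad z)"
    have IH: "ennreal (c * real (card E')) \<le> 5 ^ DIM('a) * (\<Sum>w\<in>?U'. g w)"
      using less.hyps[OF cardlt] less.prems unfolding E'_def by auto
    have R0sub: "R0 \<subseteq> LB (\<lambda>b. \<lfloor>z0 \<bullet> b\<rfloor> - 2 * int r) (\<lambda>b. \<lfloor>z0 \<bullet> b\<rfloor> + 2 * int r + 1)"
    proof
      fix z assume "z \<in> R0"
      then obtain p where p: "z \<in> E" "p \<in> Qc z (rad z)" "p \<in> Qc z0 r" unfolding R0_def by auto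
      show "z \<in> LB (\<lambda>b. \<lfloor>z0 \<bullet> b\<rfloor> - 2 * int r) (\<lambda>b. \<lfloor>z0 \<bullet> b\<rfloor> + 2 * int r + 1)"
        using Qc_nbhd[of z z0 p "rad z" r] p rmax less.prems(2) z0L by auto
    qed
    have "card R0 \<le> (4 * r + 1) ^ DIM('a)"
      using card_mono[OF LB_finite R0sub] nbhd_card[of z0 r] by simp
    also have "\<dots> \<le> (5 * r) ^ DIM('a)" using r1 by (intro power_mono) auto
    finally have cR0: "real (card R0) \<le> 5 ^ DIM('a) * real r ^ DIM('a)"
      by (metis of_nat_le_iff of_nat_mult of_nat_numeral of_nat_power power_mult_distrib)
    have cardE: "card E = card R0 + card E'"
      unfolding E'_def using R0E less.prems(1) card_Diff_subset[OF finR0 R0E] card_mono[OF less.prems(1) R0E]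
      by simp
    have disj: "Qc z0 r \<inter> ?U' = {}" unfolding E'_def R0_def by auto
    have Usub: "Qc z0 r \<union> ?U' \<subseteq> ?U" using z0 unfolding E'_def by force
    have finU: "finite ?U" using less.prems(1,2) Qc_finite by blast
    have finQ: "finite (Qc z0 r)" using Qc_finite[OF z0L] .
    have finU': "finite ?U'" using finU Usub finite_subset by blast
    have sumU: "(\<Sum>w\<in>Qc z0 r. g w) + (\<Sum>w\<in>?U'. g w) \<le> (\<Sum>w\<in>?U. g w)"
    proof -
      have "(\<Sum>w\<in>Qc z0 r. g w) + (\<Sum>w\<in>?U'. g w) = (\<Sum>w\<in>Qc z0 r \<union> ?U'. g w)"
        using sum.union_disjoint[OF finQ finU' disj, of g] by simp
      also have "\<dots> \<le> (\<Sum>w\<in>?U. g w)" by (rule sum_mono2[OF finU Usub]) auto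
      finally show ?thesis .
    qed
    have hz0: "ennreal (c * real r ^ DIM('a)) \<le> (\<Sum>w\<in>Qc z0 r. g w)"
      using less.prems(4) z0 by auto
    have "ennreal (c * real (card E)) = ennreal (c * real (card R0)) + ennreal (c * real (card E'))"
      using less.prems(5) by (simp add: cardE distrib_left ennreal_plus)
    also have "ennreal (c * real (card R0)) \<le> ennreal (5 ^ DIM('a) * (c * real r ^ DIM('a)))"
      using cR0 less.prems(5) by (intro ennreal_leI) (simp add: mult_left_mono mult.left_commute)
    also have "\<dots> = 5 ^ DIM('a) * ennreal (c * real r ^ DIM('a))"
      using less.prems(5) by (simp add: ennreal_mult ennreal_power[symmetric])
    also have "\<dots> \<le> 5 ^ DIM('a) * (\<Sum>w\<in>Qc z0 r. g w)" by (intro mult_left_mono hz0) auto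
    also note IH
    also have "5 ^ DIM('a) * (\<Sum>w\<in>Qc z0 r. g w) + 5 ^ DIM('a) * (\<Sum>w\<in>?U'. g w)
        = 5 ^ DIM('a) * ((\<Sum>w\<in>Qc z0 r. g w) + (\<Sum>w\<in>?U'. g w))" by (simp add: distrib_left)
    also have "\<dots> \<le> 5 ^ DIM('a) * (\<Sum>w\<in>?U. g w)" by (intro mult_left_mono sumU) auto
    finally show ?thesis by simp
  qed
qed




definition Ss :: "nat \<Rightarrow> nat \<Rightarrow> ('a::euclidean_space \<times> 'a) set \<Rightarrow> ennreal" where
  "Ss L n H = (\<Sum>u\<in>Qc 0 n. Ff L u H)"

lemma Ss_meas[measurable]: "Ss L n \<in> borel_measurable triple_space"
  unfolding Ss_def[abs_def] by (rule borel_measurable_sum) (rule Ff_meas_triple)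

lemma Ff_shift_neg: "Ff L u (shift_graph (- z) H) = Ff L (u + z) H"
  by (simp add: Ff_shift)

lemma Ss_shift_neg:
  assumes "z \<in> lattice"
  shows "Ss L n (shift_graph (- z) H) = (\<Sum>w\<in>Qc z n. Ff L w H)"
proof -
  have "Ss L n (shift_graph (- z) H) = (\<Sum>u\<in>Qc 0 n. Ff L (u + z) H)"
    unfolding Ss_def Ff_shift_neg ..
  also have "\<dots> = (\<Sum>w\<in>(\<lambda>u. u + z) ` Qc 0 n. Ff L w H)"
    by (subst sum.reindex) (auto simp: inj_on_def)
  finally show ?thesis using Qc_translate[OF assms] by simp
qed

locale statfield = prob_space M for M :: "'w measure" +
  fixes G :: "'w \<Rightarrow> ('a::euclidean_space \<times> 'a) set"
  assumes Gmeas: "\<And>U V. admissible_pair U V \<Longrightarrow> (\<lambda>\<omega>. pair_count (G \<omega>) U V) \<in> borel_measurable M"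
    and stat: "stationary_triple M G"
begin

lemma G_meas[measurable]: "G \<in> M \<rightarrow>\<^sub>M triple_space"
  by (rule meas_into_triple[OF Gmeas])

lemma shiftG_meas[measurable]: "(\<lambda>\<omega>. shift_graph z (G \<omega>)) \<in> M \<rightarrow>\<^sub>M triple_space"
  by (rule shift_meas_into_triple[OF Gmeas])

lemma stat_int:
  "z \<in> lattice \<Longrightarrow> \<Phi> \<in> borel_measurable triple_space \<Longrightarrow>
    (\<integral>\<^sup>+\<omega>. \<Phi> (shift_graph z (G \<omega>)) \<partial>M) = (\<integral>\<^sup>+\<omega>. \<Phi> (G \<omega>) \<partial>M)"
  by (rule stationary_nn_integral[OF Gmeas stat])

definition bad :: "nat \<Rightarrow> real \<Rightarrow> nat \<Rightarrow> ('a \<times> 'a) set \<Rightarrow> ennreal" where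
  "bad L c N H = indicator {H. \<exists>n\<in>{1..N}. ennreal (c * real n ^ DIM('a)) < Ss L n H} H"

lemma bad_set_meas: "{H. \<exists>n\<in>{1..N}. ennreal (c * real n ^ DIM('a)) < Ss L n H} \<in> sets triple_space"
proof -
  have e: "{H. \<exists>n\<in>{1..N}. ennreal (c * real n ^ DIM('a)) < Ss L n H}
     = (\<Union>n\<in>{1..N}. Ss L n -` {ennreal (c * real n ^ DIM('a))<..} \<inter> space triple_space)"
    by (auto simp: space_triple)
  show ?thesis unfolding e
    by (intro sets.finite_UN finite_atLeastAtMost ballI measurable_sets[OF Ss_meas]) auto
qed

lemma bad_meas[measurable]: "bad L c N \<in> borel_measurable triple_space"
  unfolding bad_def[abs_def] by (rule borel_measurable_indicator[OF bad_set_meas])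

lemma pointwise_max:
  assumes "c > 0"
  shows "ennreal c * (\<Sum>z\<in>Qc 0 K. bad L c N (shift_graph (- z) H))
    \<le> 5 ^ DIM('a) * (\<Sum>w\<in>Qc 0 (K + N). Ff L w H)"
proof -
  define P where "P z n \<longleftrightarrow> n\<in>{1..N} \<and> ennreal (c * real n ^ DIM('a)) < (\<Sum>w\<in>Qc z n. Ff L w H)" for z n
  define E where "E = {z\<in>Qc 0 K. \<exists>n. P z n}"
  define rad where "rad z = (SOME n. P z n)" for z
  have rad: "P z (rad z)" if "z \<in> E" for z
  proof -
    have "\<exists>n. P z n" using that unfolding E_def by blast
    then show ?thesis unfolding rad_def by (rule someI_ex)
  qed
  have QL: "Qc 0 K \<subseteq> lattice" unfolding Qc_def by auto
  have finE: "finite E" unfolding E_def by (rule finite_subset[OF _ Qc_finite[OF lattice_0]]) auto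
  have EL: "E \<subseteq> lattice" unfolding E_def using QL by auto
  have bi: "bad L c N (shift_graph (- z) H) = indicator E z" if z: "z \<in> Qc 0 K" for z
  proof -
    have zl: "z \<in> lattice" using z QL by auto
    have "(\<exists>n\<in>{1..N}. ennreal (c * real n ^ DIM('a)) < Ss L n (shift_graph (- z) H)) \<longleftrightarrow> z \<in> E"
      unfolding Ss_shift_neg[OF zl] E_def P_def using z by auto
    then show ?thesis unfolding bad_def indicator_def by simp
  qed
  have sumE: "(\<Sum>z\<in>Qc 0 K. bad L c N (shift_graph (- z) H)) = of_nat (card E)"
  proof -
    have "(\<Sum>z\<in>Qc 0 K. bad L c N (shift_graph (- z) H)) = (\<Sum>z\<in>Qc 0 K. indicator E z)"
      by (intro sum.cong refl bi)
    also have "\<dots> = of_nat (card (Qc 0 K \<inter> E))"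
      unfolding indicator_def by (subst sum_of_bool_eq[OF Qc_finite[OF lattice_0]]) (simp_all add: Qc_finite[OF lattice_0])
    also have "Qc 0 K \<inter> E = E" unfolding E_def by auto
    finally show ?thesis .
  qed
  have c1: "\<forall>z\<in>E. 1 \<le> rad z" using rad unfolding P_def by auto
  have c2: "\<forall>z\<in>E. ennreal (c * real (rad z) ^ DIM('a)) \<le> (\<Sum>w\<in>Qc z (rad z). Ff L w H)"
    using rad unfolding P_def by (auto intro: less_imp_le)
  have cov: "ennreal (c * real (card E)) \<le> 5 ^ DIM('a) * (\<Sum>w\<in>(\<Union>z\<in>E. Qc z (rad z)). Ff L w H)"
    by (rule covering[OF finE EL c1 c2]) (use assms in simp)
  have sub: "(\<Union>z\<in>E. Qc z (rad z)) \<subseteq> Qc 0 (K + N)"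
  proof (intro UN_least)
    fix z assume z: "z \<in> E"
    have "\<forall>b\<in>Basis. \<bar>z \<bullet> b\<bar> \<le> real K"
    proof
      fix b :: 'a assume b: "b \<in> Basis"
      have "- real K \<le> z \<bullet> b" "z \<bullet> b < real K" using z b unfolding E_def Qc_def by auto
      then show "\<bar>z \<bullet> b\<bar> \<le> real K" by linarith
    qed
    then have "Qc z (rad z) \<subseteq> Qc 0 (rad z + K)" by (rule Qc_shift_sub)
    also have "\<dots> \<subseteq> Qc 0 (K + N)" using rad[OF z] unfolding P_def by (intro Qc_mono) auto
    finally show "Qc z (rad z) \<subseteq> Qc 0 (K + N)" .
  qed
  have "(\<Sum>w\<in>(\<Union>z\<in>E. Qc z (rad z)). Ff L w H) \<le> (\<Sum>w\<in>Qc 0 (K + N). Ff L w H)"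
    by (rule sum_mono2[OF Qc_finite[OF lattice_0] sub]) simp
  then have "5 ^ DIM('a) * (\<Sum>w\<in>(\<Union>z\<in>E. Qc z (rad z)). Ff L w H) \<le> 5 ^ DIM('a) * (\<Sum>w\<in>Qc 0 (K + N). Ff L w H)"
    by (rule mult_left_mono) simp
  moreover have "ennreal c * (\<Sum>z\<in>Qc 0 K. bad L c N (shift_graph (- z) H)) = ennreal (c * real (card E))"
    using assms by (simp add: sumE ennreal_mult ennreal_of_nat_eq_real_of_nat)
  ultimately show ?thesis using cov by simp
qed

end



context statfield begin

lemma maximal:
  assumes "c > 0" "N \<ge> 1"
  shows "ennreal c * (\<integral>\<^sup>+\<omega>. bad L c N (G \<omega>) \<partial>M) \<le> 10 ^ DIM('a) * (\<integral>\<^sup>+\<omega>. Ff L 0 (G \<omega>) \<partial>M)"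
proof -
  have QL: "Qc 0 K \<subseteq> lattice" for K :: nat unfolding Qc_def by auto
  have fin: "finite (Qc (0::'a) K)" for K using Qc_finite[OF lattice_0] .
  have "(\<integral>\<^sup>+\<omega>. ennreal c * (\<Sum>z\<in>Qc 0 N. bad L c N (shift_graph (- z) (G \<omega>))) \<partial>M)
      \<le> (\<integral>\<^sup>+\<omega>. 5 ^ DIM('a) * (\<Sum>w\<in>Qc 0 (N + N). Ff L w (G \<omega>)) \<partial>M)"
    by (intro nn_integral_mono pointwise_max assms)
  also have "(\<integral>\<^sup>+\<omega>. 5 ^ DIM('a) * (\<Sum>w\<in>Qc 0 (N + N). Ff L w (G \<omega>)) \<partial>M)
      = 5 ^ DIM('a) * (\<Sum>w\<in>Qc 0 (N + N). (\<integral>\<^sup>+\<omega>. Ff L w (G \<omega>) \<partial>M))"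
    by (simp add: nn_integral_cmult nn_integral_sum)
  also have "(\<Sum>w\<in>Qc 0 (N + N). (\<integral>\<^sup>+\<omega>. Ff L w (G \<omega>) \<partial>M))
      = (\<Sum>w\<in>Qc (0::'a) (N + N). (\<integral>\<^sup>+\<omega>. Ff L 0 (G \<omega>) \<partial>M))"
  proof (rule sum.cong[OF refl])
    fix w :: 'a assume "w \<in> Qc 0 (N + N)"
    then have w: "- w \<in> lattice" using QL lattice_uminus by blast
    have "(\<integral>\<^sup>+\<omega>. Ff L w (G \<omega>) \<partial>M) = (\<integral>\<^sup>+\<omega>. Ff L 0 (shift_graph (- w) (G \<omega>)) \<partial>M)"
      by (simp add: Ff_shift_neg)
    also have "\<dots> = (\<integral>\<^sup>+\<omega>. Ff L 0 (G \<omega>) \<partial>M)" by (rule stat_int[OF w]) simp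
    finally show "(\<integral>\<^sup>+\<omega>. Ff L w (G \<omega>) \<partial>M) = (\<integral>\<^sup>+\<omega>. Ff L 0 (G \<omega>) \<partial>M)" .
  qed
  also have "\<dots> = of_nat ((2 * N) ^ DIM('a)) * 2 ^ DIM('a) * (\<integral>\<^sup>+\<omega>. Ff L 0 (G \<omega>) \<partial>M)"
  proof -
    have "card (Qc (0::'a) (N + N)) = (2 * N) ^ DIM('a) * 2 ^ DIM('a)"
    proof -
      have "2 * (N + N) = (2 * N) * 2" by simp
      then show ?thesis unfolding Qc_card[OF lattice_0] by (simp only: power_mult_distrib)
    qed
    then show ?thesis by simp
  qed
  finally have R0: "(\<integral>\<^sup>+\<omega>. ennreal c * (\<Sum>z\<in>Qc 0 N. bad L c N (shift_graph (- z) (G \<omega>))) \<partial>M)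
      \<le> 5 ^ DIM('a) * (of_nat ((2 * N) ^ DIM('a)) * 2 ^ DIM('a) * (\<integral>\<^sup>+\<omega>. Ff L 0 (G \<omega>) \<partial>M))" .
  have t: "(10::ennreal) ^ DIM('a) = 2 ^ DIM('a) * 5 ^ DIM('a)"
    by (simp add: power_mult_distrib[symmetric])
  have R: "(\<integral>\<^sup>+\<omega>. ennreal c * (\<Sum>z\<in>Qc 0 N. bad L c N (shift_graph (- z) (G \<omega>))) \<partial>M)
      \<le> of_nat ((2 * N) ^ DIM('a)) * (10 ^ DIM('a) * (\<integral>\<^sup>+\<omega>. Ff L 0 (G \<omega>) \<partial>M))"
    using R0 unfolding t by (simp only: mult_ac)
  have "(\<integral>\<^sup>+\<omega>. ennreal c * (\<Sum>z\<in>Qc 0 N. bad L c N (shift_graph (- z) (G \<omega>))) \<partial>M)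
      = ennreal c * (\<Sum>z\<in>Qc 0 N. (\<integral>\<^sup>+\<omega>. bad L c N (shift_graph (- z) (G \<omega>)) \<partial>M))"
    by (simp add: nn_integral_cmult nn_integral_sum)
  also have "(\<Sum>z\<in>Qc 0 N. (\<integral>\<^sup>+\<omega>. bad L c N (shift_graph (- z) (G \<omega>)) \<partial>M))
     = (\<Sum>z\<in>Qc (0::'a) N. (\<integral>\<^sup>+\<omega>. bad L c N (G \<omega>) \<partial>M))"
    using QL lattice_uminus by (intro sum.cong refl stat_int) auto
  also have "\<dots> = of_nat ((2 * N) ^ DIM('a)) * (\<integral>\<^sup>+\<omega>. bad L c N (G \<omega>) \<partial>M)"
    by (simp add: Qc_card[OF lattice_0])
  finally have "of_nat ((2 * N) ^ DIM('a)) * (ennreal c * (\<integral>\<^sup>+\<omega>. bad L c N (G \<omega>) \<partial>M))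
      \<le> of_nat ((2 * N) ^ DIM('a)) * (10 ^ DIM('a) * (\<integral>\<^sup>+\<omega>. Ff L 0 (G \<omega>) \<partial>M))"
    using R by (simp add: mult_ac)
  moreover have "(of_nat ((2 * N) ^ DIM('a)) :: ennreal) \<noteq> 0" using assms(2) by simp
  moreover have "(of_nat ((2 * N) ^ DIM('a)) :: ennreal) \<noteq> top" by (rule ennreal_of_nat_neq_top)
  ultimately show ?thesis using ennreal_mult_le_mult_iff by blast
qed

end



lemma pair_count_graph: "pair_count (graph_of X T) U V = ecount X {x\<in>U. T x \<in> V}"
proof -
  have "graph_of X T = (\<lambda>x. (x, T x)) ` X" unfolding graph_of_def by auto
  then show ?thesis unfolding pair_count_def
    by (simp only:) (rule ecount_image_inj, auto simp: inj_on_def)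
qed

lemma ecount_mono: "A \<subseteq> B \<Longrightarrow> ecount X A \<le> ecount X B"
  unfolding ecount_def by (intro emeasure_mono) auto

lemma ecount_finite: "finite (X \<inter> A) \<Longrightarrow> ecount X A = of_nat (card (X \<inter> A))"
  by (simp add: ecount_eq)

lemma count_bound:
  fixes X :: "'a::euclidean_space set" and T :: "'a \<Rightarrow> 'a"
  assumes fin: "\<forall>B. bounded B \<longrightarrow> finite (X \<inter> B)" and Rn: "R \<le> real n"
  shows "finite {x \<in> X. x \<in> box (- (R *\<^sub>R One)) (R *\<^sub>R One) \<and> norm (T x - x) > real DIM('a) * (real L + 1)}
    \<and> ennreal (card {x \<in> X. x \<in> box (- (R *\<^sub>R One)) (R *\<^sub>R One) \<and> norm (T x - x) > real DIM('a) * (real L + 1)})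
       \<le> Ss L n (graph_of X T)"
proof -
  define S where "S = {x \<in> X. x \<in> box (- (R *\<^sub>R One)) (R *\<^sub>R One) \<and> norm (T x - x) > real DIM('a) * (real L + 1)}"
  define A where "A u = {x \<in> X. x \<in> Cc u \<and> T x \<notin> Dd L u}" for u
  have finS: "finite S"
  proof -
    have "S \<subseteq> X \<inter> box (- (R *\<^sub>R One)) (R *\<^sub>R One)" unfolding S_def by auto
    then show ?thesis using fin bounded_box finite_subset by blast
  qed
  have finA: "finite (A u)" for u
  proof -
    have "A u \<subseteq> X \<inter> Cc u" unfolding A_def by auto
    then show ?thesis using fin Cc_bounded finite_subset by blast
  qed
  have sub: "S \<subseteq> (\<Union>u\<in>Qc 0 n. A u)"
  proof
    fix x assume x: "x \<in> S"
    define u where "u = (\<Sum>b\<in>Basis. real_of_int \<lfloor>x \<bullet> b\<rfloor> *\<^sub>R b)"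
    have ub: "u \<bullet> b = real_of_int \<lfloor>x \<bullet> b\<rfloor>" if "b \<in> Basis" for b
      unfolding u_def using that by simp
    have xb: "- R < x \<bullet> b \<and> x \<bullet> b < R" if "b \<in> Basis" for b
      using x that unfolding S_def by (auto simp: mem_box)
    have uL: "u \<in> lattice" unfolding lattice_def using ub by auto
    have "- real n \<le> u \<bullet> b \<and> u \<bullet> b < real n" if b: "b \<in> Basis" for b
    proof -
      have "- int n \<le> \<lfloor>x \<bullet> b\<rfloor>" unfolding le_floor_iff using xb[OF b] Rn by simp
      moreover have "\<lfloor>x \<bullet> b\<rfloor> < int n" unfolding floor_less_iff using xb[OF b] Rn by simp
      ultimately show ?thesis unfolding ub[OF b] by linarith
    qed
    then have uQ: "u \<in> Qc 0 n" unfolding Qc_def using uL by simp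
    have xC: "x \<in> Cc u" unfolding Cc_def using ub by auto
    have "T x \<notin> Dd L u"
    proof
      assume D: "T x \<in> Dd L u"
      have "\<bar>(T x - x) \<bullet> b\<bar> \<le> real L + 1" if b: "b \<in> Basis" for b
      proof -
        have "u \<bullet> b - real L \<le> T x \<bullet> b" "T x \<bullet> b < u \<bullet> b + real L + 1"
          using D b unfolding Dd_def by auto
        moreover have "u \<bullet> b \<le> x \<bullet> b" "x \<bullet> b < u \<bullet> b + 1" using xC b unfolding Cc_def by auto
        ultimately show ?thesis by (simp add: inner_diff_left abs_le_iff)
      qed
      then have "(\<Sum>b\<in>(Basis::'a set). \<bar>(T x - x) \<bullet> b\<bar>) \<le> (\<Sum>b\<in>(Basis::'a set). real L + 1)"
        by (rule sum_mono)
      then have "norm (T x - x) \<le> (\<Sum>b\<in>(Basis::'a set). real L + 1)"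
        using norm_le_l1[of "T x - x"] by linarith
      then show False using x unfolding S_def by simp
    qed
    then show "x \<in> (\<Union>u\<in>Qc 0 n. A u)" using x xC uQ unfolding A_def S_def by blast
  qed
  have "card S \<le> card (\<Union>u\<in>Qc 0 n. A u)"
    using sub by (intro card_mono) (auto intro: finA Qc_finite[OF lattice_0])
  also have "\<dots> \<le> (\<Sum>u\<in>Qc 0 n. card (A u))" by (rule card_UN_le[OF Qc_finite[OF lattice_0]])
  finally have "ennreal (real (card S)) \<le> ennreal (real (\<Sum>u\<in>Qc 0 n. card (A u)))" by (intro ennreal_leI of_nat_mono)
  also have "\<dots> = of_nat (\<Sum>u\<in>Qc 0 n. card (A u))" by (rule ennreal_of_nat_eq_real_of_nat[symmetric])
  also have "\<dots> = (\<Sum>u\<in>Qc 0 n. of_nat (card (A u)))" by (rule of_nat_sum)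
  also have "\<dots> = Ss L n (graph_of X T)"
    unfolding Ss_def Ff_def pair_count_graph
  proof (rule sum.cong[OF refl])
    fix u :: 'a
    have "X \<inter> {x \<in> Cc u. T x \<in> - Dd L u} = A u" unfolding A_def by auto
    then show "of_nat (card (A u)) = ecount X {x \<in> Cc u. T x \<in> - Dd L u}"
      using ecount_finite[of X "{x \<in> Cc u. T x \<in> - Dd L u}"] finA by simp
  qed
  finally show ?thesis using finS unfolding S_def by simp
qed




lemma poisson_mean_finite:
  fixes Xs :: "'w \<Rightarrow> 'a::euclidean_space set"
  assumes P: "prob_space M" and pp: "unit_poisson_pp M Xs"
    and Bb: "B \<in> sets borel" "bounded B"
    and Nm: "(\<lambda>\<omega>. ecount (Xs \<omega>) B) \<in> borel_measurable M"
  shows "(\<integral>\<^sup>+\<omega>. ecount (Xs \<omega>) B \<partial>M) < \<infinity>"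
proof -
  interpret prob_space M by (rule P)
  define m where "m = measure lborel B"
  have m0: "0 \<le> m" unfolding m_def by simp
  define A where "A n = {\<omega> \<in> space M. ecount (Xs \<omega>) B = of_nat n}" for n :: nat
  have Asets: "A n \<in> sets M" for n
  proof -
    have "A n = (\<lambda>\<omega>. ecount (Xs \<omega>) B) -` {of_nat n} \<inter> space M" unfolding A_def by auto
    then show ?thesis using measurable_sets[OF Nm, of "{of_nat n}"] by simp
  qed
  have pA: "measure M (A n) = exp (- m) * m ^ n / fact n" for n
    using pp Bb unfolding unit_poisson_pp_def A_def m_def by blast
  have finAE: "AE \<omega> in M. finite (Xs \<omega> \<inter> B)"
    using pp Bb unfolding unit_poisson_pp_def by (auto elim!: AE_mp)
  have ae: "AE \<omega> in M. ecount (Xs \<omega>) B = (\<Sum>n. of_nat n * indicator (A n) \<omega>)"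
    using finAE
  proof (rule AE_mp, intro AE_I2 impI)
    fix \<omega> assume \<omega>: "\<omega> \<in> space M" and f: "finite (Xs \<omega> \<inter> B)"
    define k where "k = card (Xs \<omega> \<inter> B)"
    have e: "ecount (Xs \<omega>) B = of_nat k" unfolding k_def using f by (simp add: ecount_eq)
    have "(\<lambda>n. of_nat n * indicator (A n) \<omega> :: ennreal) = (\<lambda>n. if n = k then of_nat k else 0)"
      using \<omega> by (auto simp: A_def e indicator_def)
    moreover have "(\<lambda>n. if n = k then of_nat k else 0 :: ennreal) sums of_nat k"
      using sums_single[of k "\<lambda>n. of_nat n :: ennreal"] by (simp cong: if_cong)
    ultimately show "ecount (Xs \<omega>) B = (\<Sum>n. of_nat n * indicator (A n) \<omega>)"
      using e sums_unique by metis
  qed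
  have "(\<integral>\<^sup>+\<omega>. ecount (Xs \<omega>) B \<partial>M) = (\<integral>\<^sup>+\<omega>. (\<Sum>n. of_nat n * indicator (A n) \<omega>) \<partial>M)"
    by (rule nn_integral_cong_AE[OF ae])
  also have "\<dots> = (\<Sum>n. (\<integral>\<^sup>+\<omega>. of_nat n * indicator (A n) \<omega> \<partial>M))"
    by (rule nn_integral_suminf) (use Asets in auto)
  also have "\<dots> = (\<Sum>n. of_nat n * ennreal (exp (- m) * m ^ n / fact n))"
    using Asets by (simp add: nn_integral_cmult_indicator emeasure_eq_measure pA)
  also have "\<dots> \<le> (\<Sum>n. ennreal (inverse (fact n) * (2 * m) ^ n))"
  proof (intro suminf_le summableI)
    fix n :: nat
    have "real n * (exp (- m) * m ^ n / fact n) \<le> 2 ^ n * (1 * m ^ n / fact n)"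
      using m0 less_exp[of n] by (intro mult_mono divide_right_mono) (auto intro: less_imp_le)
    also have "\<dots> = inverse (fact n) * (2 * m) ^ n" by (simp add: power_mult_distrib field_simps)
    finally have "real n * (exp (- m) * m ^ n / fact n) \<le> inverse (fact n) * (2 * m) ^ n" .
    then have "ennreal (real n * (exp (- m) * m ^ n / fact n)) \<le> ennreal (inverse (fact n) * (2 * m) ^ n)"
      by (rule ennreal_leI)
    moreover have "of_nat n * ennreal (exp (- m) * m ^ n / fact n) = ennreal (real n * (exp (- m) * m ^ n / fact n))"
      by (subst ennreal_mult) (use m0 in \<open>auto simp: ennreal_of_nat_eq_real_of_nat\<close>)
    ultimately show "of_nat n * ennreal (exp (- m) * m ^ n / fact n) \<le> ennreal (inverse (fact n) * (2 * m) ^ n)"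
      by simp
  qed
  also have "\<dots> = ennreal (\<Sum>n. inverse (fact n) * (2 * m) ^ n)"
    by (rule suminf_ennreal2) (use m0 summable_exp[of "2 * m"] in \<open>simp_all del: power_mult_distrib\<close>)
  also have "\<dots> < \<infinity>" by simp
  finally show ?thesis .
qed




lemma small_mean:
  fixes Xs :: "'w \<Rightarrow> 'a::euclidean_space set" and T :: "'w \<Rightarrow> 'a \<Rightarrow> 'a"
  assumes P: "prob_space M" and pp: "unit_poisson_pp M Xs"
    and Gm: "\<And>U V. admissible_pair U V \<Longrightarrow> (\<lambda>\<omega>. pair_count (graph_of (Xs \<omega>) (T \<omega>)) U V) \<in> borel_measurable M"
    and d: "\<delta> > 0"
  shows "\<exists>L. (\<integral>\<^sup>+\<omega>. Ff L 0 (graph_of (Xs \<omega>) (T \<omega>)) \<partial>M) < \<delta>"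
proof -
  interpret prob_space M by (rule P)
  define f where "f L \<omega> = Ff L 0 (graph_of (Xs \<omega>) (T \<omega>))" for L \<omega>
  have f_eq: "f L \<omega> = ecount (Xs \<omega>) {x \<in> Cc 0. T \<omega> x \<in> - Dd L 0}" for L \<omega>
    unfolding f_def Ff_def pair_count_graph ..
  have fm: "f L \<in> borel_measurable M" for L
    unfolding f_def[abs_def] Ff_def using Gm[OF admissible_Ff] .
  have Nm: "(\<lambda>\<omega>. ecount (Xs \<omega>) (Cc 0)) \<in> borel_measurable M"
  proof -
    have "admissible_pair (Cc (0::'a)) UNIV" by (rule admissible_borel) (auto intro: Cc_borel Cc_bounded)
    from Gm[OF this] show ?thesis unfolding pair_count_graph by simp
  qed
  have Nfin: "(\<integral>\<^sup>+\<omega>. ecount (Xs \<omega>) (Cc 0) \<partial>M) < \<infinity>"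
    by (rule poisson_mean_finite[OF P pp Cc_borel Cc_bounded Nm])
  have f0fin: "(\<integral>\<^sup>+\<omega>. f 0 \<omega> \<partial>M) < \<infinity>"
  proof -
    have "(\<integral>\<^sup>+\<omega>. f 0 \<omega> \<partial>M) \<le> (\<integral>\<^sup>+\<omega>. ecount (Xs \<omega>) (Cc 0) \<partial>M)"
      unfolding f_eq by (intro nn_integral_mono ecount_mono) auto
    then show ?thesis using Nfin by (rule le_less_trans)
  qed
  have dec: "AE \<omega> in M. f (Suc i) \<omega> \<le> f i \<omega>" for i
  proof (intro AE_I2)
    fix \<omega>
    have "Dd i (0::'a) \<subseteq> Dd (Suc i) 0" unfolding Dd_def by force
    then show "f (Suc i) \<omega> \<le> f i \<omega>" unfolding f_eq by (intro ecount_mono) auto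
  qed
  have finAE: "AE \<omega> in M. finite (Xs \<omega> \<inter> Cc 0)"
    using pp Cc_bounded unfolding unit_poisson_pp_def by (auto elim!: AE_mp)
  have inf0: "AE \<omega> in M. (INF L. f L \<omega>) = 0"
    using finAE
  proof (rule AE_mp, intro AE_I2 impI)
    fix \<omega> assume fin: "finite (Xs \<omega> \<inter> Cc 0)"
    define V where "V = (\<lambda>(x, b). \<bar>T \<omega> x \<bullet> b\<bar>) ` ((Xs \<omega> \<inter> Cc 0) \<times> Basis)"
    have finV: "finite (insert 0 V)" unfolding V_def using fin by simp
    define K where "K = nat \<lceil>Max (insert 0 V)\<rceil>"
    have Kb: "\<bar>T \<omega> x \<bullet> b\<bar> \<le> real K" if "x \<in> Xs \<omega> \<inter> Cc 0" "b \<in> Basis" for x b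
    proof -
      have "\<bar>T \<omega> x \<bullet> b\<bar> \<in> insert 0 V" unfolding V_def using that by force
      then have "\<bar>T \<omega> x \<bullet> b\<bar> \<le> Max (insert 0 V)" using finV by simp
      also have "\<dots> \<le> real K" unfolding K_def by linarith
      finally show ?thesis .
    qed
    have "Xs \<omega> \<inter> {x \<in> Cc 0. T \<omega> x \<in> - Dd K 0} = {}"
    proof (intro equalityI subsetI)
      fix x assume x: "x \<in> Xs \<omega> \<inter> {x \<in> Cc 0. T \<omega> x \<in> - Dd K 0}"
      then have "T \<omega> x \<in> Dd K 0" unfolding Dd_def using Kb[of x] by (force simp: abs_le_iff)
      then show "x \<in> {}" using x by auto
    qed auto
    then have "f K \<omega> = 0" unfolding f_eq ecount_def by simp
    then have "(INF L. f L \<omega>) \<le> 0" by (metis INF_lower UNIV_I)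
    then show "(INF L. f L \<omega>) = 0" by simp
  qed
  have "(INF L. integral\<^sup>N M (f L)) = (\<integral>\<^sup>+\<omega>. (INF L. f L \<omega>) \<partial>M)"
    by (rule nn_integral_monotone_convergence_INF_AE[symmetric, OF dec fm f0fin])
  also have "\<dots> = 0" using inf0 by (simp add: nn_integral_cong_AE)
  finally have "(INF L. integral\<^sup>N M (f L)) < \<delta>" using d by simp
  then show ?thesis unfolding INF_less_iff f_def by auto
qed




definition Bset :: "nat \<Rightarrow> real \<Rightarrow> (('a::euclidean_space \<times> 'a) set) set" where
  "Bset L c = {H. \<exists>k::nat. \<exists>m::nat. \<forall>n::nat. m \<le> n \<longrightarrow> Ss L n H \<le> ennreal (c * real (n + k) ^ DIM('a))}"

lemma Bset_sets: "Bset L c \<in> sets triple_space"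
proof -
  have "{H \<in> space triple_space. \<exists>k::nat. \<exists>m::nat. \<forall>n::nat. m \<le> n \<longrightarrow> Ss L n H \<le> ennreal (c * real (n + k) ^ DIM('a))}
     \<in> sets triple_space" by measurable
  then show ?thesis unfolding Bset_def space_triple by simp
qed

lemma Ss_shift_le:
  assumes "z \<in> lattice" "\<forall>b\<in>Basis. \<bar>z \<bullet> b\<bar> \<le> real j"
  shows "Ss L n (shift_graph z H) \<le> Ss L (n + j) H"
proof -
  have zl: "- z \<in> lattice" using lattice_uminus[OF assms(1)] .
  have "Ss L n (shift_graph z H) = Ss L n (shift_graph (- (- z)) H)" by simp
  also have "\<dots> = (\<Sum>w\<in>Qc (- z) n. Ff L w H)" by (rule Ss_shift_neg[OF zl])
  also have "\<dots> \<le> (\<Sum>w\<in>Qc 0 (n + j). Ff L w H)"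
  proof (rule sum_mono2[OF Qc_finite[OF lattice_0]])
    show "Qc (- z) n \<subseteq> Qc 0 (n + j)" by (rule Qc_shift_sub) (use assms(2) in simp)
  qed simp
  also have "\<dots> = Ss L (n + j) H" unfolding Ss_def ..
  finally show ?thesis .
qed

lemma Bset_shift1:
  assumes "z \<in> lattice" "H \<in> Bset L c"
  shows "shift_graph z H \<in> Bset L c"
proof -
  define j where "j = nat \<lceil>\<Sum>b\<in>(Basis::'a set). \<bar>z \<bullet> b\<bar>\<rceil>"
  have jb: "\<forall>b\<in>Basis. \<bar>z \<bullet> b\<bar> \<le> real j"
  proof
    fix b :: 'a assume b: "b \<in> Basis"
    have "\<bar>z \<bullet> b\<bar> \<le> (\<Sum>b\<in>(Basis::'a set). \<bar>z \<bullet> b\<bar>)"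
      using b by (intro member_le_sum) auto
    also have "\<dots> \<le> real j" unfolding j_def by linarith
    finally show "\<bar>z \<bullet> b\<bar> \<le> real j" .
  qed
  obtain k m where km: "\<forall>n::nat. m \<le> n \<longrightarrow> Ss L n H \<le> ennreal (c * real (n + k) ^ DIM('a))"
    using assms(2) unfolding Bset_def by blast
  have "Ss L n (shift_graph z H) \<le> ennreal (c * real (n + (j + k)) ^ DIM('a))" if "m \<le> n" for n
  proof -
    have "Ss L n (shift_graph z H) \<le> Ss L (n + j) H" by (rule Ss_shift_le[OF assms(1) jb])
    also have "\<dots> \<le> ennreal (c * real (n + j + k) ^ DIM('a))" using km[rule_format, of "n + j"] that by (simp add: add.assoc)
    finally show ?thesis by (simp add: add.assoc)
  qed
  then show ?thesis unfolding Bset_def by blast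
qed

lemma Bset_inv:
  assumes "z \<in> lattice"
  shows "shift_graph z H \<in> Bset L c \<longleftrightarrow> H \<in> Bset L c"
proof
  assume "shift_graph z H \<in> Bset L c"
  from Bset_shift1[OF lattice_uminus[OF assms] this] show "H \<in> Bset L c"
    by (simp add: shift_graph_comp shift_graph_0)
qed (rule Bset_shift1[OF assms])

context statfield begin

lemma ae_Bset:
  assumes erg: "ergodic_triple M G" and c: "c > 0"
    and small: "10 ^ DIM('a) * (\<integral>\<^sup>+\<omega>. Ff L 0 (G \<omega>) \<partial>M) \<le> ennreal (c / 2)"
  shows "AE \<omega> in M. G \<omega> \<in> Bset L c"
proof -
  define BN where "BN N = {\<omega>\<in>space M. \<exists>n\<in>{1..N}. ennreal (c * real n ^ DIM('a)) < Ss L n (G \<omega>)}" for N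
  have BNsets: "BN N \<in> sets M" for N
  proof -
    have "BN N = G -` {H. \<exists>n\<in>{1..N}. ennreal (c * real n ^ DIM('a)) < Ss L n H} \<inter> space M"
      unfolding BN_def by auto
    then show ?thesis using measurable_sets[OF G_meas bad_set_meas] by simp
  qed
  have BNle: "emeasure M (BN N) \<le> ennreal (1/2)" for N
  proof (cases "N \<ge> 1")
    case True
    have "(\<integral>\<^sup>+\<omega>. bad L c N (G \<omega>) \<partial>M) = (\<integral>\<^sup>+\<omega>. indicator (BN N) \<omega> \<partial>M)"
      by (intro nn_integral_cong) (simp add: bad_def BN_def indicator_def)
    also have "\<dots> = emeasure M (BN N)" using BNsets by simp
    finally have e: "(\<integral>\<^sup>+\<omega>. bad L c N (G \<omega>) \<partial>M) = emeasure M (BN N)" .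
    have "ennreal c * emeasure M (BN N) \<le> ennreal (c / 2)"
      using maximal[OF c True, of L] small unfolding e by (rule order.trans)
    also have "ennreal (c / 2) = ennreal c * ennreal (1/2)"
      using c ennreal_mult[of c "1/2"] by simp
    finally show ?thesis using c by (simp add: ennreal_mult_le_mult_iff)
  next
    case False
    then have "BN N = {}" unfolding BN_def by auto
    then show ?thesis by simp
  qed
  define Bad where "Bad = {\<omega>\<in>space M. \<exists>n\<ge>1. ennreal (c * real n ^ DIM('a)) < Ss L n (G \<omega>)}"
  have Bad_UN: "Bad = (\<Union>N. BN N)" unfolding Bad_def BN_def
    by (auto; metis atLeastAtMost_iff order_refl)
  have inc: "incseq BN" unfolding incseq_def BN_def by auto
  have "emeasure M Bad = (SUP N. emeasure M (BN N))"
    unfolding Bad_UN by (rule SUP_emeasure_incseq[symmetric]) (use BNsets inc in auto)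
  also have "\<dots> \<le> ennreal (1/2)" by (rule SUP_least) (rule BNle)
  finally have "ennreal (prob Bad) \<le> ennreal (1/2)" by (simp only: emeasure_eq_measure)
  then have badle: "prob Bad \<le> 1/2" by (subst (asm) ennreal_le_iff) auto
  have Badsets: "Bad \<in> sets M" unfolding Bad_UN using BNsets by auto
  have good: "space M - Bad \<subseteq> G -` Bset L c \<inter> space M"
  proof
    fix \<omega> assume \<omega>: "\<omega> \<in> space M - Bad"
    then have "\<forall>n::nat. 1 \<le> n \<longrightarrow> Ss L n (G \<omega>) \<le> ennreal (c * real (n + 0) ^ DIM('a))"
      unfolding Bad_def by (auto simp: not_less)
    then show "\<omega> \<in> G -` Bset L c \<inter> space M" using \<omega> unfolding Bset_def by blast
  qed
  have GBsets: "G -` Bset L c \<inter> space M \<in> sets M" using measurable_sets[OF G_meas Bset_sets] .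
  have "prob (space M - Bad) \<le> prob (G -` Bset L c \<inter> space M)"
    using good GBsets by (intro finite_measure_mono) auto
  moreover have "prob (space M - Bad) = 1 - prob Bad" using prob_compl[OF Badsets] .
  ultimately have pos: "prob (G -` Bset L c \<inter> space M) \<noteq> 0" using badle by linarith
  have inv: "shift_graph z H \<in> Bset L c \<longleftrightarrow> H \<in> Bset L c" if "z \<in> lattice" for z H
    using Bset_inv[OF that] .
  have "prob (G -` Bset L c \<inter> space M) = 0 \<or> prob (G -` Bset L c \<inter> space M) = 1"
    using erg[unfolded ergodic_triple_def, rule_format, OF Bset_sets inv] .
  then have "prob (G -` Bset L c \<inter> space M) = 1" using pos by blast
  from AE_prob_1[OF this] show ?thesis by auto
qed

end



theorem lemma2p1:
  fixes M :: "'w measure"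
    and Xs Ys :: "'w \<Rightarrow> ('a::euclidean_space) set"
    and T :: "'w \<Rightarrow> 'a \<Rightarrow> 'a"
  assumes "prob_space M"
    and "unit_poisson_pp M Xs" and "unit_poisson_pp M Ys"
    and "prob_space.indep_var M config_space Xs config_space Ys"
    and "AE \<omega> in M. bij_betw (T \<omega>) (Xs \<omega>) (Ys \<omega>) \<and> cyclically_monotone (Xs \<omega>) (T \<omega>)"
    and "\<And>U V. admissible_pair U V \<Longrightarrow>
           (\<lambda>\<omega>. pair_count (graph_of (Xs \<omega>) (T \<omega>)) U V) \<in> borel_measurable M"
    and "stationary_triple M (\<lambda>\<omega>. graph_of (Xs \<omega>) (T \<omega>))"
    and "ergodic_triple M (\<lambda>\<omega>. graph_of (Xs \<omega>) (T \<omega>))"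
  shows "\<forall>\<epsilon>>0. \<exists>L::real. \<exists>r::'w \<Rightarrow> real. r \<in> borel_measurable M \<and>
           (AE \<omega> in M. \<forall>R. R \<ge> r \<omega> \<longrightarrow>
              (let S = {x \<in> Xs \<omega>. x \<in> box (- (R *\<^sub>R One)) (R *\<^sub>R One) \<and> norm (T \<omega> x - x) > L}
               in finite S \<and> real (card S) \<le> (\<epsilon> * R) ^ DIM('a)))"
proof (intro allI impI)
  fix \<epsilon> :: real assume \<epsilon>: "\<epsilon> > 0"
  define G where "G = (\<lambda>\<omega>. graph_of (Xs \<omega>) (T \<omega>))"
  have sf: "statfield M G" unfolding statfield_def statfield_axioms_def G_def using assms(1,6,7) by blast
  interpret statfield M G by (rule sf)
  define d where "d = DIM('a)"
  define c where "c = (\<epsilon> / 4) ^ d"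
  have c: "c > 0" unfolding c_def using \<epsilon> by simp
  have "ennreal (c / (2 * 10 ^ d)) > 0" using c by simp
  from small_mean[OF assms(1,2,6) this]
  obtain L0 where L0: "(\<integral>\<^sup>+\<omega>. Ff L0 0 (G \<omega>) \<partial>M) < ennreal (c / (2 * 10 ^ d))"
    unfolding G_def by blast
  have small: "10 ^ DIM('a) * (\<integral>\<^sup>+\<omega>. Ff L0 0 (G \<omega>) \<partial>M) \<le> ennreal (c / 2)"
  proof -
    have "10 ^ DIM('a) * (\<integral>\<^sup>+\<omega>. Ff L0 0 (G \<omega>) \<partial>M) \<le> 10 ^ d * ennreal (c / (2 * 10 ^ d))"
      using L0 unfolding d_def by (intro mult_left_mono) (auto intro: less_imp_le)
    also have "\<dots> = ennreal (10 ^ d * (c / (2 * 10 ^ d)))"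
    proof -
      have e1: "(10::ennreal) ^ d = ennreal (10 ^ d)" by (subst ennreal_power[symmetric]) auto
      show ?thesis unfolding e1 by (rule ennreal_mult[symmetric]) (use c in auto)
    qed
    also have "10 ^ d * (c / (2 * 10 ^ d)) = c / 2" by simp
    finally show ?thesis .
  qed
  have aeB: "AE \<omega> in M. G \<omega> \<in> Bset L0 c" by (rule ae_Bset[OF _ c small]) (use assms(8) G_def in simp)
  define P where "P p \<omega> \<longleftrightarrow> (\<forall>n::nat. p \<le> n \<longrightarrow> Ss L0 n (G \<omega>) \<le> ennreal (c * real (n + p) ^ d))" for p \<omega>
  define r where "r \<omega> = 1 + real (LEAST p. P p \<omega>)" for \<omega>
  have Pm: "(\<lambda>\<omega>. P p \<omega>) \<in> measurable M (count_space UNIV)" for p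
    unfolding P_def by measurable
  have rm: "r \<in> borel_measurable M"
  proof -
    have "(\<lambda>\<omega>. LEAST p. P p \<omega>) \<in> measurable M (count_space UNIV)"
      by (rule measurable_Least[OF Pm])
    then show ?thesis unfolding r_def by measurable
  qed
  have finAE: "AE \<omega> in M. \<forall>B. bounded B \<longrightarrow> finite (Xs \<omega> \<inter> B)"
    using assms(2) unfolding unit_poisson_pp_def by blast
  have "AE \<omega> in M. \<forall>R. R \<ge> r \<omega> \<longrightarrow>
          (let S = {x \<in> Xs \<omega>. x \<in> box (- (R *\<^sub>R One)) (R *\<^sub>R One) \<and> norm (T \<omega> x - x) > real d * (real L0 + 1)}
           in finite S \<and> real (card S) \<le> (\<epsilon> * R) ^ DIM('a))"
    using aeB finAE
  proof eventually_elim
    case (elim \<omega>)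
    obtain k m where km: "\<forall>n::nat. m \<le> n \<longrightarrow> Ss L0 n (G \<omega>) \<le> ennreal (c * real (n + k) ^ DIM('a))"
      using elim(1) unfolding Bset_def by blast
    have "P (max k m) \<omega>" unfolding P_def
    proof (intro allI impI)
      fix n :: nat assume n: "max k m \<le> n"
      have "Ss L0 n (G \<omega>) \<le> ennreal (c * real (n + k) ^ DIM('a))" using km n by simp
      also have "\<dots> \<le> ennreal (c * real (n + max k m) ^ d)"
        unfolding d_def using c by (intro ennreal_leI mult_left_mono power_mono) auto
      finally show "Ss L0 n (G \<omega>) \<le> ennreal (c * real (n + max k m) ^ d)" .
    qed
    then have Pp: "P (LEAST p. P p \<omega>) \<omega>" by (rule LeastI)
    define p0 where "p0 = (LEAST p. P p \<omega>)"
    show ?case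
    proof (intro allI impI)
      fix R assume R: "r \<omega> \<le> R"
      then have R1: "1 + real p0 \<le> R" unfolding r_def p0_def .
      define n where "n = nat \<lceil>R\<rceil>"
      have Rn: "R \<le> real n" unfolding n_def by linarith
      have nR: "real n < R + 1" unfolding n_def using R1 by linarith
      have np: "p0 \<le> n" using R1 Rn by linarith
      have cb: "finite {x \<in> Xs \<omega>. x \<in> box (- (R *\<^sub>R One)) (R *\<^sub>R One) \<and> norm (T \<omega> x - x) > real DIM('a) * (real L0 + 1)}
        \<and> ennreal (card {x \<in> Xs \<omega>. x \<in> box (- (R *\<^sub>R One)) (R *\<^sub>R One) \<and> norm (T \<omega> x - x) > real DIM('a) * (real L0 + 1)})
         \<le> Ss L0 n (graph_of (Xs \<omega>) (T \<omega>))"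
        by (rule count_bound[OF _ Rn]) (use elim(2) in blast)
      have S1: "Ss L0 n (graph_of (Xs \<omega>) (T \<omega>)) \<le> ennreal (c * real (n + p0) ^ d)"
        using Pp np unfolding P_def p0_def G_def by blast
      have "real (n + p0) = real n + real p0" by simp
      then have a: "real (n + p0) \<le> 4 * R" using np nR R1 by linarith
      have b: "real (n + p0) ^ d \<le> (4 * R) ^ d" by (rule power_mono[OF a]) simp
      have "c * real (n + p0) ^ d \<le> c * (4 * R) ^ d" by (rule mult_left_mono[OF b]) (use c in simp)
      also have "c * (4 * R) ^ d = (\<epsilon> * R) ^ d"
      proof -
        have "c * (4 * R) ^ d = ((\<epsilon> / 4) * (4 * R)) ^ d" unfolding c_def by (rule power_mult_distrib[symmetric])
        also have "(\<epsilon> / 4) * (4 * R) = \<epsilon> * R" by simp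
        finally show ?thesis .
      qed
      finally have S2: "ennreal (c * real (n + p0) ^ d) \<le> ennreal ((\<epsilon> * R) ^ d)" by (rule ennreal_leI)
      have "ennreal (real (card {x \<in> Xs \<omega>. x \<in> box (- (R *\<^sub>R One)) (R *\<^sub>R One) \<and> norm (T \<omega> x - x) > real DIM('a) * (real L0 + 1)}))
          \<le> ennreal ((\<epsilon> * R) ^ d)"
        using order.trans[OF cb[THEN conjunct2] order.trans[OF S1 S2]] by simp
      then have "real (card {x \<in> Xs \<omega>. x \<in> box (- (R *\<^sub>R One)) (R *\<^sub>R One) \<and> norm (T \<omega> x - x) > real DIM('a) * (real L0 + 1)})
          \<le> (\<epsilon> * R) ^ d"
        using \<epsilon> R1 by (subst (asm) ennreal_le_iff) auto
      then show "let S = {x \<in> Xs \<omega>. x \<in> box (- (R *\<^sub>R One)) (R *\<^sub>R One) \<and> norm (T \<omega> x - x) > real d * (real L0 + 1)}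
           in finite S \<and> real (card S) \<le> (\<epsilon> * R) ^ DIM('a)"
        using cb unfolding Let_def d_def by simp
    qed
  qed
  then show "\<exists>L::real. \<exists>r::'w \<Rightarrow> real. r \<in> borel_measurable M \<and>
           (AE \<omega> in M. \<forall>R. R \<ge> r \<omega> \<longrightarrow>
              (let S = {x \<in> Xs \<omega>. x \<in> box (- (R *\<^sub>R One)) (R *\<^sub>R One) \<and> norm (T \<omega> x - x) > L}
               in finite S \<and> real (card S) \<le> (\<epsilon> * R) ^ DIM('a)))"
    using rm by blast
qed



end
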